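(* For all integers $t,l,n\ge1$, $\beth(t,l^2,n)\ge \beth(2t,l,n)$.
   Context: Fix a totally ordered alphabet with the given number of letters. A word is primitive if it is not of the form $v^k$ with $k>1$. A system of type $X(t,l)$ is a finite sequence $(w_1,\dots,w_N)$ of primitive words of length $t$ over an $l$-letter totally ordered alphabet, no two of which are cyclic shifts of each other. For $1\le i\le N$, $1\le j\le t$, let $w(i,j)$ be the cyclic shift of $w_i$ beginning with its $j$-th letter. Define a strict partial order on the pairs $(i,j)$ by $(i_1,j_1)\prec(i_2,j_2)$ iff $i_1<i_2$ and $w(i_1,j_1)$ is lexicographically smaller than $w(i_2,j_2)$. The system is $n$-light if there are no $n$ pairwise $\prec$-incomparable pairs. $\beth(t,l,n)$ denotes the largest $N$ of an $n$-light system of type $X(t,l)$. *)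

theory Defs
  imports Main
begin

text \<open>Alphabet with l letters: the naturals 0,...,l-1 with their usual order.
Words are lists; positions and indices are 0-based.\<close>

definition primitive :: "nat list \<Rightarrow> bool" where
  "primitive w \<longleftrightarrow> \<not> (\<exists>v k. k > 1 \<and> w = concat (replicate k v))"

definition word_over :: "nat \<Rightarrow> nat \<Rightarrow> nat list \<Rightarrow> bool" where
  "word_over t l w \<longleftrightarrow> length w = t \<and> set w \<subseteq> {..<l}"

definition system_X :: "nat \<Rightarrow> nat \<Rightarrow> nat list list \<Rightarrow> bool" where
  "system_X t l ws \<longleftrightarrow>
     (\<forall>i < length ws. word_over t l (ws ! i) \<and> primitive (ws ! i)) \<and>
     (\<forall>a < length ws. \<forall>b < length ws. a \<noteq> b \<longrightarrow> (\<forall>j. ws ! a \<noteq> rotate j (ws ! b)))"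

text \<open>w(i,j): cyclic shift of the i-th word starting at its j-th letter (0-based).\<close>
definition shift_word :: "nat list list \<Rightarrow> nat \<times> nat \<Rightarrow> nat list" where
  "shift_word ws p = rotate (snd p) (ws ! fst p)"

definition prec :: "nat list list \<Rightarrow> nat \<times> nat \<Rightarrow> nat \<times> nat \<Rightarrow> bool" where
  "prec ws p q \<longleftrightarrow> fst p < fst q \<and> ord_class.lexordp (shift_word ws p) (shift_word ws q)"

definition n_light :: "nat \<Rightarrow> nat \<Rightarrow> nat list list \<Rightarrow> bool" where
  "n_light n t ws \<longleftrightarrow>
     \<not> (\<exists>S. S \<subseteq> {..<length ws} \<times> {..<t} \<and> card S = n \<and>
            (\<forall>p\<in>S. \<forall>q\<in>S. \<not> prec ws p q))"

definition beth :: "nat \<Rightarrow> nat \<Rightarrow> nat \<Rightarrow> nat" where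
  "beth t l n = (GREATEST N. \<exists>ws. length ws = N \<and> system_X t l ws \<and> n_light n t ws)"

end

theory Submission
  imports Defs
begin

fun enc :: "nat \<Rightarrow> nat list \<Rightarrow> nat list" where
  "enc l (a#b#r) = (l*a+b) # enc l r"
| "enc l _ = []"

fun dec :: "nat \<Rightarrow> nat list \<Rightarrow> nat list" where
  "dec l [] = []"
| "dec l (c#r) = (c div l) # (c mod l) # dec l r"

lemma enc_length: "length (enc l w) = length w div 2"
  by (induction l w rule: enc.induct) auto

lemma enc_append: "even (length u) \<Longrightarrow> enc l (u @ v) = enc l u @ enc l v"
  by (induction l u rule: enc.induct) auto

lemma dec_append: "dec l (u @ v) = dec l u @ dec l v"
  by (induction u) auto

lemma dec_concat_rep: "dec l (concat (replicate k v)) = concat (replicate k (dec l v))"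
  by (induction k) (auto simp: dec_append)

lemma dec_enc: "even (length w) \<Longrightarrow> set w \<subseteq> {..<l} \<Longrightarrow> dec l (enc l w) = w"
  by (induction l w rule: enc.induct) auto

lemma enc_lt: "a < l \<Longrightarrow> b < (l::nat) \<Longrightarrow> l*a+b < l*l"
proof -
  assume "a < l" "b < l"
  then have "l*a + b < l*a + l" by simp
  also have "\<dots> = l*(a+1)" by simp
  also have "\<dots> \<le> l*l" using \<open>a<l\<close> by (intro mult_le_mono2) simp
  finally show ?thesis .
qed

lemma enc_set: "set w \<subseteq> {..<l} \<Longrightarrow> set (enc l w) \<subseteq> {..<l^2}"
  by (induction l w rule: enc.induct) (auto simp: power2_eq_square enc_lt)

lemma enc_rotate1: "even (length w) \<Longrightarrow> rotate1 (enc l w) = enc l (rotate1 (rotate1 w))"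
proof (cases "(l,w)" rule: enc.cases)
  case (1 l' a b r)
  assume e: "even (length w)"
  then have "even (length r)" using 1 by simp
  then show ?thesis using 1 by (simp add: enc_append)
qed auto

lemma enc_rotate: "even (length w) \<Longrightarrow> rotate j (enc l w) = enc l (rotate (2*j) w)"
proof (induction j)
  case 0 then show ?case by simp
next
  case (Suc j)
  have "rotate (Suc j) (enc l w) = rotate1 (rotate j (enc l w))" by (simp add: rotate_Suc)
  also have "\<dots> = rotate1 (enc l (rotate (2*j) w))" using Suc by simp
  also have "\<dots> = enc l (rotate1 (rotate1 (rotate (2*j) w)))"
    using Suc.prems by (intro enc_rotate1) simp
  also have "rotate1 (rotate1 (rotate (2*j) w)) = rotate (2 * Suc j) w"
    by (simp add: rotate_Suc)
  finally show ?case .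
qed

lemma enc_lex: "length u = length v \<Longrightarrow> even (length u) \<Longrightarrow> set u \<subseteq> {..<l} \<Longrightarrow>
   set v \<subseteq> {..<l} \<Longrightarrow> ord_class.lexordp u v \<Longrightarrow> ord_class.lexordp (enc l u) (enc l v)"
proof (induction l u arbitrary: v rule: enc.induct)
  case (1 l a b r)
  then obtain c d s where v: "v = c#d#s"
    by (cases v; cases "tl v") auto
  have abcd: "a < l" "b < l" "c < l" "d < l" using 1 v by auto
  show ?case
  proof (cases "a < c")
    case True
    have "l*a + b < l*a + l" using abcd by simp
    also have "\<dots> = l*(a+1)" by simp
    also have "\<dots> \<le> l*c" using True by (intro mult_le_mono2) simp
    finally show ?thesis using v by simp
  next
    case False
    with 1(6) v have ac: "a = c" and rest: "b < d \<or> (b = d \<and> ord_class.lexordp r s)"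
      by (auto simp: ord.lexordp_simps)
    show ?thesis
    proof (cases "b < d")
      case True then show ?thesis using v ac by simp
    next
      case False
      then have "b = d" "ord_class.lexordp r s" using rest by auto
      moreover have "ord_class.lexordp (enc l r) (enc l s)"
        using 1 v \<open>ord_class.lexordp r s\<close> by auto
      ultimately show ?thesis using v ac by simp
    qed
  qed
next
  case ("2_1" l) then show ?case by simp
next
  case ("2_2" l x) then show ?case by (cases v) auto
qed

lemma bounded:
  assumes "system_X T L ws"
  shows "length ws \<le> card {xs. set xs \<subseteq> {..<L} \<and> length xs = T}"
proof -
  have d: "distinct ws"
  proof (subst distinct_conv_nth, intro allI impI)
    fix i j assume "i < length ws" "j < length ws" "i \<noteq> j"
    then show "ws ! i \<noteq> ws ! j" using assms unfolding system_X_def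
      by (metis rotate0 id_apply funpow_0 rotate_def)
  qed
  have "set ws \<subseteq> {xs. set xs \<subseteq> {..<L} \<and> length xs = T}"
    using assms unfolding system_X_def word_over_def by (fastforce simp: in_set_conv_nth)
  then have "card (set ws) \<le> card {xs. set xs \<subseteq> {..<L} \<and> length xs = T}"
    by (intro card_mono) (auto intro: finite_lists_length_eq)
  then show ?thesis using d by (simp add: distinct_card)
qed

theorem mainTheorem18:
  fixes t l n :: nat
  assumes "t \<ge> 1" and "l \<ge> 1" and "n \<ge> 1"
  shows "beth t (l ^ 2) n \<ge> beth (2 * t) l n"
proof -
  let ?P = "\<lambda>T L N. \<exists>ws. length ws = N \<and> system_X T L ws \<and> n_light n T ws"
  have P0: "?P T L 0" for T L
    using assms(3) by (intro exI[of _ "[]"]) (auto simp: system_X_def n_light_def)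
  have bnd: "\<And>N. ?P T L N \<Longrightarrow> N \<le> card {xs. set xs \<subseteq> {..<L} \<and> length xs = T}" for T L
    using bounded by blast
  have "?P (2*t) l (beth (2*t) l n)"
    unfolding beth_def by (rule GreatestI_nat[of "?P (2*t) l", OF P0 bnd])
  then obtain ws where len: "length ws = beth (2*t) l n" and sys: "system_X (2*t) l ws"
    and lt: "n_light n (2*t) ws" by blast
  define ws' where "ws' = map (enc l) ws"
  have wi: "\<And>i. i < length ws \<Longrightarrow> length (ws!i) = 2*t \<and> set (ws!i) \<subseteq> {..<l} \<and> primitive (ws!i)"
    using sys unfolding system_X_def word_over_def by auto
  have sys': "system_X t (l^2) ws'"
    unfolding system_X_def
  proof (intro conjI allI impI)
    fix i assume i: "i < length ws'"
    then have i': "i < length ws" by (simp add: ws'_def)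
    show "word_over t (l^2) (ws'!i)" using wi[OF i'] enc_set[of "ws!i" l]
      by (simp add: ws'_def word_over_def enc_length i')
    show "primitive (ws'!i)" unfolding primitive_def
    proof
      assume "\<exists>v k. k > 1 \<and> ws'!i = concat (replicate k v)"
      then obtain v k where k: "k > 1" and e: "enc l (ws!i) = concat (replicate k v)"
        using i' by (auto simp: ws'_def)
      have "ws!i = dec l (enc l (ws!i))" using wi[OF i'] by (simp add: dec_enc)
      also have "\<dots> = concat (replicate k (dec l v))" by (simp add: e dec_concat_rep)
      finally show False using wi[OF i'] k unfolding primitive_def by blast
    qed
  next
    fix a b j assume a: "a < length ws'" and b: "b < length ws'" and ab: "a \<noteq> b"
    show "ws'!a \<noteq> rotate j (ws'!b)"
    proof
      assume e: "ws'!a = rotate j (ws'!b)"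
      have a': "a < length ws" and b': "b < length ws" using a b by (auto simp: ws'_def)
      have "ws!a = dec l (ws'!a)" using wi[OF a'] a' by (simp add: dec_enc ws'_def)
      also have "\<dots> = dec l (enc l (rotate (2*j) (ws!b)))"
        using e wi[OF b'] b' by (simp add: ws'_def enc_rotate)
      also have "\<dots> = rotate (2*j) (ws!b)" using wi[OF b'] by (intro dec_enc) auto
      finally show False using sys a' b' ab unfolding system_X_def by blast
    qed
  qed
  have lt': "n_light n t ws'"
    unfolding n_light_def
  proof
    assume "\<exists>S. S \<subseteq> {..<length ws'} \<times> {..<t} \<and> card S = n \<and> (\<forall>p\<in>S. \<forall>q\<in>S. \<not> prec ws' p q)"
    then obtain S where S: "S \<subseteq> {..<length ws} \<times> {..<t}" and c: "card S = n"
      and ac: "\<forall>p\<in>S. \<forall>q\<in>S. \<not> prec ws' p q" by (auto simp: ws'_def)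
    define f where "f = (\<lambda>p::nat\<times>nat. (fst p, 2 * snd p))"
    have inj: "inj f" unfolding f_def inj_def by auto
    have "f ` S \<subseteq> {..<length ws} \<times> {..<2*t}" using S unfolding f_def by auto
    moreover have "card (f ` S) = n" using c inj by (simp add: card_image inj_on_subset)
    moreover have "\<forall>p\<in>f ` S. \<forall>q\<in>f ` S. \<not> prec ws p q"
    proof (intro ballI)
      fix p' q' assume "p' \<in> f ` S" "q' \<in> f ` S"
      then obtain p q where p: "p \<in> S" "p' = f p" and q: "q \<in> S" "q' = f q" by auto
      show "\<not> prec ws p' q'"
      proof
        assume pr: "prec ws p' q'"
        have pi: "fst p < length ws" and qi: "fst q < length ws" using p q S by auto
        have lx: "ord_class.lexordp (rotate (2*snd p) (ws!fst p)) (rotate (2*snd q) (ws!fst q))"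
          and fl: "fst p < fst q"
          using pr p q unfolding prec_def shift_word_def f_def by auto
        have "ord_class.lexordp (enc l (rotate (2*snd p) (ws!fst p))) (enc l (rotate (2*snd q) (ws!fst q)))"
          using wi[OF pi] wi[OF qi] lx by (intro enc_lex) auto
        then have "prec ws' p q" using fl pi qi wi[OF pi] wi[OF qi]
          unfolding prec_def shift_word_def ws'_def by (simp add: enc_rotate)
        then show False using ac p q by blast
      qed
    qed
    ultimately show False using lt unfolding n_light_def by (simp add: len[symmetric]) blast
  qed
  have "length ws' \<le> beth t (l^2) n"
    unfolding beth_def by (rule Greatest_le_nat[of "?P t (l^2)", OF _ bnd]) (use sys' lt' in blast)+
  then show ?thesis using len by (simp add: ws'_def)
qed

end
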